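(* Let $\varepsilon>0$. There exists $c>0$ such that for every $b>c$ and every conformal embedding $\varphi:B(b)/\mathbb{Z}\to\mathbb{C}/\mathbb{Z}$ with $\varphi(0)=0$ and $\varphi_*(1)=1$ on fundamental groups, the restriction of $\varphi$ to $B(b-c)/\mathbb{Z}$ is within $\varepsilon$ of the identity.
   Context: For $b>0$, $B(b)=\{z\in\mathbb{C}:|\operatorname{Im}z|<b\}$, and $B(b)/\mathbb{Z}$ is its quotient by $z\mapsto z+1$, a subcylinder of $\mathbb{C}/\mathbb{Z}$. Fundamental groups of $B(b)/\mathbb{Z}$ and $\mathbb{C}/\mathbb{Z}$ are both identified with $\mathbb{Z}$ (generated by the image of $[0,1]$). "Within $\varepsilon$ of the identity" means the Euclidean distance in $\mathbb{C}/\mathbb{Z}$ between $\varphi(z)$ and $z$ is at most $\varepsilon$ for every $z\in B(b-c)/\mathbb{Z}$. *)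

theory Defs
  imports "HOL-Complex_Analysis.Complex_Analysis"
begin

definition strip :: "real \<Rightarrow> complex set" where
  "strip b = {z. \<bar>Im z\<bar> < b}"

text \<open>A conformal embedding phi of B(b)/Z into C/Z with phi_*(1) = 1 on fundamental
groups, described by its lift F : B(b) \<rightarrow> C to the universal covers.
The lift is holomorphic, satisfies F(z+1) = F(z)+1 (this is exactly phi_*(1) = 1),
and the induced map on the quotients is injective.\<close>
definition cyl_embedding_lift :: "real \<Rightarrow> (complex \<Rightarrow> complex) \<Rightarrow> bool" where
  "cyl_embedding_lift b F \<longleftrightarrow>
     F holomorphic_on strip b \<and>
     (\<forall>z\<in>strip b. F (z + 1) = F z + 1) \<and>
     (\<forall>z\<in>strip b. \<forall>w\<in>strip b. F z - F w \<in> \<int> \<longrightarrow> z - w \<in> \<int>)"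

definition cyl_dist :: "complex \<Rightarrow> complex \<Rightarrow> real" where
  "cyl_dist u v = (INF k::int. cmod (u - v - of_int k))"

end

theory Submission
  imports Defs
begin


definition v2 :: "real \<Rightarrow> real \<Rightarrow> real^2" where "v2 x y = (\<chi> i. if i = 1 then x else y)"
lemma v2_nth[simp]: "v2 x y $ 1 = x" "v2 x y $ 2 = y" by (auto simp: v2_def)

lemma v2_eq_iff: "v2 x y = v2 x' y' \<longleftrightarrow> x = x' \<and> y = y'"
  by (metis v2_nth)

lemma vec2_eq: "(v::real^2) = v2 (v$1) (v$2)"
  by (simp add: vec_eq_iff forall_2)

lemma mem_cbox_v2: "v \<in> cbox (v2 a c) (v2 b d) \<longleftrightarrow> a \<le> v$1 \<and> v$1 \<le> b \<and> c \<le> v$2 \<and> v$2 \<le> d"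
  by (simp add: mem_box_cart forall_2)

lemma bl_e': "bounded_linear (\<lambda>v::real^2. Complex (v$1) (v$2))"
proof -
  have "linear (\<lambda>v::real^2. Complex (v$1) (v$2))"
    by (rule linearI) (simp_all add: complex_eq_iff)
  then show ?thesis using linear_conv_bounded_linear by blast
qed

lemma bl_e: "bounded_linear (\<lambda>z. v2 (Re z) (Im z))"
proof -
  have "linear (\<lambda>z. v2 (Re z) (Im z))"
    by (rule linearI) (simp_all add: vec_eq_iff forall_2)
  then show ?thesis using linear_conv_bounded_linear by blast
qed

lemma det_cmult: "det (matrix (\<lambda>u::real^2. v2 (Re (A * Complex (u$1) (u$2))) (Im (A * Complex (u$1) (u$2))))) = (cmod A)^2"
  by (simp add: det_2 matrix_def axis_def cmod_power2 algebra_simps) (simp add: power2_eq_square)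


lemma twiddle_integral:
  fixes f :: "real^2 \<Rightarrow> real"
  assumes "f integrable_on cbox (v2 a c) (v2 b d)"
  shows "integral (cbox (c,a) (d,b)) (\<lambda>(y,x). f (v2 x y)) = integral (cbox (v2 a c) (v2 b d)) f"
proof -
  define \<iota> where "\<iota> = (\<lambda>(y::real,x::real). v2 x y)"
  define h where "h = (\<lambda>v::real^2. (v$2, v$1))"
  have bl: "bounded_linear \<iota>"
  proof -
    have "linear \<iota>" unfolding \<iota>_def
      by (rule linearI) (auto simp: vec_eq_iff forall_2)
    then show ?thesis using linear_conv_bounded_linear by blast
  qed
  have img1: "\<iota> ` cbox (u1,u2) (w1,w2) = cbox (v2 u2 u1) (v2 w2 w1)" for u1 u2 w1 w2
  proof
    show "\<iota> ` cbox (u1, u2) (w1, w2) \<subseteq> cbox (v2 u2 u1) (v2 w2 w1)"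
      by (auto simp: \<iota>_def cbox_Pair_iff mem_cbox_v2)
    show "cbox (v2 u2 u1) (v2 w2 w1) \<subseteq> \<iota> ` cbox (u1, u2) (w1, w2)"
    proof
      fix v assume "v \<in> cbox (v2 u2 u1) (v2 w2 w1)"
      then have "(v$2, v$1) \<in> cbox (u1,u2) (w1,w2)" by (auto simp: cbox_Pair_iff mem_cbox_v2)
      moreover have "v = \<iota> (v$2, v$1)" by (simp add: \<iota>_def vec2_eq[symmetric])
      ultimately show "v \<in> \<iota> ` cbox (u1, u2) (w1, w2)" by blast
    qed
  qed
  have img2: "h ` cbox (v2 u2 u1) (v2 w2 w1) = cbox (u1,u2) (w1,w2)" for u1 u2 w1 w2
  proof
    show "h ` cbox (v2 u2 u1) (v2 w2 w1) \<subseteq> cbox (u1, u2) (w1, w2)"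
      by (auto simp: h_def cbox_Pair_iff mem_cbox_v2)
    show "cbox (u1, u2) (w1, w2) \<subseteq> h ` cbox (v2 u2 u1) (v2 w2 w1)"
    proof
      fix p assume p: "p \<in> cbox (u1, u2) (w1, w2)"
      obtain x y where pxy: "p = (x,y)" by fastforce
      have "v2 y x \<in> cbox (v2 u2 u1) (v2 w2 w1)" using p pxy by (auto simp: cbox_Pair_iff mem_cbox_v2)
      moreover have "p = h (v2 y x)" by (simp add: h_def pxy)
      ultimately show "p \<in> h ` cbox (v2 u2 u1) (v2 w2 w1)" by blast
    qed
  qed
  have cont: "Henstock_Kurzweil_Integration.content (\<iota> ` cbox u w) = 1 * Henstock_Kurzweil_Integration.content (cbox u w)" for u w :: "real \<times> real"
  proof -
    obtain u1 u2 where u: "u = (u1,u2)" by fastforce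
    obtain w1 w2 where w: "w = (w1,w2)" by fastforce
    have "Henstock_Kurzweil_Integration.content (cbox (v2 u2 u1) (v2 w2 w1)) = Henstock_Kurzweil_Integration.content {u1..w1} * Henstock_Kurzweil_Integration.content {u2..w2}"
    proof (cases "u1 \<le> w1 \<and> u2 \<le> w2")
      case True
      then have ne: "cbox (v2 u2 u1) (v2 w2 w1) \<noteq> {}"
        using mem_cbox_v2[of "v2 u2 u1" u2 u1 w2 w1] by auto
      show ?thesis using True by (simp add: content_cbox_cart[OF ne] UNIV_2)
    next
      case False
      then have e: "cbox (v2 u2 u1) (v2 w2 w1) = {}"
        by (auto simp: mem_cbox_v2)
      show ?thesis using False by (auto simp: e content_real_if)
    qed
    then show ?thesis by (simp add: u w img1 content_Pair del: content_real_if)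
  qed
  have "((\<lambda>p. f (\<iota> p)) has_integral (1/1) *\<^sub>R integral (cbox (v2 a c) (v2 b d)) f) (h ` cbox (v2 a c) (v2 b d))"
  proof (rule has_integral_twiddle[where g=\<iota> and h=h and r=1])
    show "h (\<iota> x) = x" for x by (auto simp: h_def \<iota>_def split: prod.splits)
    show "\<iota> (h x) = x" for x by (simp add: h_def \<iota>_def vec2_eq[symmetric])
    show "continuous (at x) \<iota>" for x using bl by (simp add: linear_continuous_at)
    show "\<exists>w z. \<iota> ` cbox u v = cbox w z" for u v
      by (metis img1 surj_pair)
    show "\<exists>w z. h ` cbox u v = cbox w z" for u v
    proof -
      have "u = v2 (u$1) (u$2)" "v = v2 (v$1) (v$2)" by (simp_all add: vec2_eq[symmetric])
      then show ?thesis by (metis img2)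
    qed
    show "Henstock_Kurzweil_Integration.content (\<iota> ` cbox u v) = 1 * Henstock_Kurzweil_Integration.content (cbox u v)" for u v by (rule cont)
    show "(f has_integral integral (cbox (v2 a c) (v2 b d)) f) (cbox (v2 a c) (v2 b d))"
      using assms by (simp add: has_integral_integral)
  qed auto
  then have "(( \<lambda>(y,x). f (v2 x y)) has_integral integral (cbox (v2 a c) (v2 b d)) f) (cbox (c,a) (d,b))"
    by (simp add: img2 \<iota>_def case_prod_unfold)
  then show ?thesis by (simp add: integral_unique)
qed


lemma area_bound:
  fixes F :: "complex \<Rightarrow> complex" and S :: "complex set"
  assumes holF: "F holomorphic_on S" and S: "open S" and inj: "inj_on F S"
    and box: "\<And>x y. a \<le> x \<Longrightarrow> x \<le> b \<Longrightarrow> c \<le> y \<Longrightarrow> y \<le> d \<Longrightarrow> Complex x y \<in> S"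
    and img: "\<And>x y. a \<le> x \<Longrightarrow> x \<le> b \<Longrightarrow> c \<le> y \<Longrightarrow> y \<le> d \<Longrightarrow>
        a' \<le> Re (F (Complex x y)) \<and> Re (F (Complex x y)) \<le> b' \<and> c' \<le> Im (F (Complex x y)) \<and> Im (F (Complex x y)) \<le> d'"
    and ab: "a \<le> b" and cd: "c \<le> d"
  shows "integral (cbox (c,a) (d,b)) (\<lambda>(y,x). (cmod (deriv F (Complex x y)))^2) \<le> (b' - a') * (d' - c')"
proof -
  define e' :: "real^2 \<Rightarrow> complex" where "e' = (\<lambda>v. Complex (v$1) (v$2))"
  define e :: "complex \<Rightarrow> real^2" where "e = (\<lambda>z. v2 (Re z) (Im z))"
  define \<Phi> where "\<Phi> = (\<lambda>v. e (F (e' v)))"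
  define S2 where "S2 = cbox (v2 a c) (v2 b d)"
  define \<Phi>' where "\<Phi>' = (\<lambda>v u. e (deriv F (e' v) * e' u))"
  have e'S: "e' v \<in> S" if "v \<in> S2" for v
    using that box by (auto simp: S2_def mem_cbox_v2 e'_def)
  have ble': "bounded_linear e'" using bl_e' by (simp add: e'_def)
  have ble: "bounded_linear e" using bl_e by (simp add: e_def)
  have der: "(\<Phi> has_derivative \<Phi>' v) (at v within S2)" if v: "v \<in> S2" for v
  proof -
    have dF: "(F has_derivative (\<lambda>h. deriv F (e' v) * h)) (at (e' v))"
      using holomorphic_derivI[OF holF S e'S[OF v]] by (simp add: has_field_derivative_def)
    have "((\<lambda>v. F (e' v)) has_derivative (\<lambda>u. deriv F (e' v) * e' u)) (at v within S2)"
      using has_derivative_compose[OF bounded_linear_imp_has_derivative[OF ble'] dF] .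
    from has_derivative_compose[OF this bounded_linear_imp_has_derivative[OF ble]]
    show ?thesis by (simp add: \<Phi>_def \<Phi>'_def)
  qed
  have detJ: "\<bar>det (matrix (\<Phi>' v))\<bar> = (cmod (deriv F (e' v)))^2" for v
    using det_cmult[of "deriv F (e' v)"] by (simp add: \<Phi>'_def e_def e'_def)
  have injP: "inj_on \<Phi> S2"
  proof (rule inj_onI)
    fix v w assume v: "v \<in> S2" and w: "w \<in> S2" and eq: "\<Phi> v = \<Phi> w"
    then have "F (e' v) = F (e' w)" by (simp add: \<Phi>_def e_def v2_eq_iff complex_eq_iff)
    then have "e' v = e' w" using inj e'S[OF v] e'S[OF w] by (auto dest: inj_onD)
    then show "v = w" by (simp add: e'_def vec_eq_iff forall_2)
  qed
  have contd: "continuous_on S (deriv F)"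
    using holF S by (simp add: holomorphic_deriv holomorphic_on_imp_continuous_on)
  have conte': "continuous_on S2 e'" using ble' linear_continuous_on by blast
  have contJ: "continuous_on S2 (\<lambda>v. (cmod (deriv F (e' v)))^2)"
    by (intro continuous_intros continuous_on_compose2[OF contd conte']) (use e'S in auto)
  have intJ: "(\<lambda>v. \<bar>det (matrix (\<Phi>' v))\<bar>) integrable_on S2"
    unfolding detJ using contJ by (simp add: S2_def integrable_continuous)
  have S2leb: "S2 \<in> sets lebesgue" by (simp add: S2_def)
  have meas: "\<Phi> ` S2 \<in> lmeasurable"
    using measurable_differentiable_image_eq[OF S2leb der injP] intJ by blast
  have meq: "measure lebesgue (\<Phi> ` S2) = integral S2 (\<lambda>v. \<bar>det (matrix (\<Phi>' v))\<bar>)"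
    using measure_differentiable_image_eq[OF S2leb der injP intJ] .
  have sub: "\<Phi> ` S2 \<subseteq> cbox (v2 a' c') (v2 b' d')"
  proof
    fix w assume "w \<in> \<Phi> ` S2"
    then obtain v where v: "v \<in> S2" "w = \<Phi> v" by blast
    have "e' v = Complex (v$1) (v$2)" by (simp add: e'_def)
    with img[of "v$1" "v$2"] v show "w \<in> cbox (v2 a' c') (v2 b' d')"
      by (auto simp: S2_def mem_cbox_v2 \<Phi>_def e_def)
  qed
  have ne: "cbox (v2 a' c') (v2 b' d') \<noteq> {}"
  proof -
    have "v2 a c \<in> S2" using ab cd by (simp add: S2_def mem_cbox_v2)
    then show ?thesis using sub by blast
  qed
  have "measure lebesgue (\<Phi> ` S2) \<le> measure lebesgue (cbox (v2 a' c') (v2 b' d'))"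
    by (rule measure_mono_fmeasurable[OF sub]) (use meas in auto)
  also have "\<dots> = (b' - a') * (d' - c')"
    by (simp add: content_cbox_cart[OF ne] UNIV_2)
  finally have le: "integral S2 (\<lambda>v. (cmod (deriv F (e' v)))^2) \<le> (b' - a') * (d' - c')"
    using meq detJ by simp
  have "integral (cbox (c,a) (d,b)) (\<lambda>(y,x). (\<lambda>v. (cmod (deriv F (e' v)))^2) (v2 x y))
        = integral S2 (\<lambda>v. (cmod (deriv F (e' v)))^2)"
    unfolding S2_def by (rule twiddle_integral) (use contJ in \<open>simp add: S2_def integrable_continuous\<close>)
  then show ?thesis using le by (simp add: e'_def)
qed



lemma strip_iff: "z \<in> strip b \<longleftrightarrow> \<bar>Im z\<bar> < b" by (simp add: strip_def)

lemma open_strip: "open (strip b)"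
proof -
  have "strip b = {z. Im z < b} \<inter> {z. Im z > -b}" by (auto simp: strip_def)
  then show ?thesis by (simp add: open_Int open_halfspace_Im_lt open_halfspace_Im_gt)
qed

lemma convex_strip: "convex (strip b)"
proof -
  have "strip b = {z. Im z < b} \<inter> {z. Im z > -b}" by (auto simp: strip_def)
  then show ?thesis by (simp add: convex_Int convex_halfspace_Im_lt convex_halfspace_Im_gt)
qed

lemma connected_strip: "connected (strip b)"
  by (simp add: convex_connected convex_strip)

lemma strip_shift: "z + of_int k \<in> strip b \<longleftrightarrow> z \<in> strip b"
  by (simp add: strip_def)

lemma per_int:
  assumes per: "\<And>z. z \<in> strip b \<Longrightarrow> f (z + 1) = f z + c" and z: "z \<in> strip b"
  shows "f (z + of_int k) = f z + of_int k * c"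
proof -
  have pos: "f (w + of_nat n) = f w + of_nat n * c" if "w \<in> strip b" for w n
  proof (induction n)
    case 0 then show ?case by simp
  next
    case (Suc n)
    have "w + of_nat n \<in> strip b" using that strip_shift[of w "int n"] by simp
    then have "f (w + of_nat n + 1) = f (w + of_nat n) + c" using per by blast
    then show ?case using Suc by (simp add: algebra_simps)
  qed
  show ?thesis
  proof (cases "k \<ge> 0")
    case True
    define n where "n = nat k"
    have "k = int n" using True by (simp add: n_def)
    then show ?thesis using pos[OF z, of n] by simp
  next
    case False
    define n where "n = nat (- k)"
    have n: "k = - int n" using False by (simp add: n_def)
    have w: "z - of_nat n \<in> strip b" using strip_shift[of z "- int n"] z by simp
    have "f (z - of_nat n + of_nat n) = f (z - of_nat n) + of_nat n * c" using pos[OF w] .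
    then show ?thesis using n by (simp add: algebra_simps)
  qed
qed

lemma periodic_max:
  fixes \<phi> :: "complex \<Rightarrow> complex"
  assumes hol: "\<phi> holomorphic_on strip b" and per: "\<And>z. z \<in> strip b \<Longrightarrow> \<phi> (z + 1) = \<phi> z"
    and t: "-b < t1" "t1 \<le> t2" "t2 < b"
    and l1: "\<And>x. cmod (\<phi> (Complex x t1)) \<le> M" and l2: "\<And>x. cmod (\<phi> (Complex x t2)) \<le> M"
    and z: "t1 \<le> Im z" "Im z \<le> t2"
  shows "cmod (\<phi> z) \<le> M"
proof -
  have perint: "\<phi> (w + of_int k) = \<phi> w" if "w \<in> strip b" for w k
    using per_int[of b \<phi> 0 w k] per that by simp
  define K where "K = cbox (Complex 0 t1) (Complex 1 t2)"
  have Ks: "K \<subseteq> strip b" using t by (auto simp: K_def in_cbox_complex_iff strip_def)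
  have cK: "compact K" by (simp add: K_def)
  have "Complex 0 t1 \<in> K" using t by (simp add: K_def in_cbox_complex_iff)
  then have neK: "K \<noteq> {}" by blast
  have ctK: "continuous_on K (\<lambda>w. cmod (\<phi> w))"
    using holomorphic_on_imp_continuous_on[OF holomorphic_on_subset[OF hol Ks]]
    by (rule continuous_on_norm)
  obtain p where p: "p \<in> K" and pmax0: "\<forall>w\<in>K. cmod (\<phi> w) \<le> cmod (\<phi> p)"
    using continuous_attains_sup[OF cK neK ctK] by blast
  have pmax: "cmod (\<phi> w) \<le> cmod (\<phi> p)" if "w \<in> K" for w using pmax0 that by blast
  have bnd: "cmod (\<phi> w) \<le> cmod (\<phi> p)" if "t1 \<le> Im w" "Im w \<le> t2" for w
  proof -
    define w' where "w' = w - of_int \<lfloor>Re w\<rfloor>"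
    have "w' \<in> K" using that unfolding w'_def K_def in_cbox_complex_iff
      by (simp add: floor_le_iff) linarith
    have "w' \<in> strip b" using \<open>w' \<in> K\<close> Ks by blast
    then have "\<phi> (w' + of_int \<lfloor>Re w\<rfloor>) = \<phi> w'" by (rule perint)
    then have "\<phi> w = \<phi> w'" by (simp add: w'_def)
    then show ?thesis using pmax[OF \<open>w' \<in> K\<close>] by simp
  qed
  have "cmod (\<phi> p) \<le> M"
  proof (cases "Im p = t1 \<or> Im p = t2")
    case True
    then show ?thesis
    proof
      assume "Im p = t1"
      then have "p = Complex (Re p) t1" by (simp add: complex_eq_iff)
      then show ?thesis using l1 by metis
    next
      assume "Im p = t2"
      then have "p = Complex (Re p) t2" by (simp add: complex_eq_iff)
      then show ?thesis using l2 by metis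
    qed
  next
    case False
    define U where "U = {w. t1 < Im w} \<inter> {w. Im w < t2}"
    have "open U" by (simp add: U_def open_Int open_halfspace_Im_lt open_halfspace_Im_gt)
    have "U \<subseteq> strip b" using t by (auto simp: U_def strip_def)
    have "p \<in> U" using p False by (auto simp: U_def K_def in_cbox_complex_iff)
    have bndU: "cmod (\<phi> w) \<le> cmod (\<phi> p)" if "w \<in> U" for w
      using that bnd by (simp add: U_def)
    have "\<phi> constant_on strip b"
      by (rule maximum_modulus_principle[OF hol open_strip connected_strip \<open>open U\<close> \<open>U \<subseteq> strip b\<close> \<open>p \<in> U\<close> bndU])
    then obtain c where c: "\<And>w. w \<in> strip b \<Longrightarrow> \<phi> w = c" by (auto simp: constant_on_def)
    have "Complex 0 t1 \<in> strip b" "p \<in> strip b" using t p Ks by (auto simp: strip_def)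
    then have "\<phi> p = \<phi> (Complex 0 t1)" using c by simp
    then show ?thesis using l1 by simp
  qed
  then show ?thesis using bnd[OF z] by simp
qed



lemma line_vderiv:
  assumes "(h has_field_derivative h') (at (Complex x y))"
  shows "((\<lambda>t. h (Complex t y)) has_vector_derivative h') (at x within S)"
proof -
  have e1: "((\<lambda>w. w + Complex 0 y) has_field_derivative 1) (at (of_real x))"
    by (rule derivative_eq_intros refl)+ simp
  have eq: "of_real x + Complex 0 y = Complex x y" by (simp add: complex_eq_iff)
  have "((\<lambda>w. h (w + Complex 0 y)) has_field_derivative h' * 1) (at (of_real x))"
    using DERIV_chain2[where f=h and g="\<lambda>w. w + Complex 0 y" and x="of_real x", OF _ e1] assms eq by simp
  then have "((\<lambda>t. h (of_real t + Complex 0 y)) has_vector_derivative h') (at x within S)"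
    using has_vector_derivative_real_field by simp
  moreover have "(\<lambda>t. h (of_real t + Complex 0 y)) = (\<lambda>t. h (Complex t y))"
  proof
    fix t :: real
    have "of_real t + Complex 0 y = Complex t y" by (simp add: complex_eq_iff)
    then show "h (of_real t + Complex 0 y) = h (Complex t y)" by simp
  qed
  ultimately show ?thesis by simp
qed

locale cyl =
  fixes F :: "complex \<Rightarrow> complex" and b :: real
  assumes hol: "F holomorphic_on strip b"
    and per: "\<And>z. z \<in> strip b \<Longrightarrow> F (z + 1) = F z + 1"
    and injZ: "\<And>z w. z \<in> strip b \<Longrightarrow> w \<in> strip b \<Longrightarrow> F z - F w \<in> \<int> \<Longrightarrow> z - w \<in> \<int>"

begin

lemma injF: "inj_on F (strip b)"
proof (rule inj_onI)
  fix z w assume z: "z \<in> strip b" and w: "w \<in> strip b" and eq: "F z = F w"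
  then have "z - w \<in> \<int>" using injZ by simp
  then obtain k where k: "z - w = of_int k" by (auto elim: Ints_cases)
  then have zk: "z = w + of_int k" by (simp add: algebra_simps)
  have "F z = F w + of_int k" unfolding zk using per_int[of b F 1 w k] per w by simp
  then have "k = 0" using eq by simp
  then show "z = w" using zk by simp
qed

lemma dF: "z \<in> strip b \<Longrightarrow> (F has_field_derivative deriv F z) (at z)"
  using holomorphic_derivI[OF hol open_strip] by blast

lemma deriv_per: assumes z: "z \<in> strip b" shows "deriv F (z + 1) = deriv F z"
proof -
  have z1: "z + 1 \<in> strip b" using z strip_shift[of z 1] by simp
  have d1: "((\<lambda>w. F (w + 1)) has_field_derivative deriv F (z + 1)) (at z)"
  proof -
    have e1: "((\<lambda>w. w + 1) has_field_derivative 1) (at z)" by (auto intro!: derivative_eq_intros)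
    show ?thesis using DERIV_chain2[where f=F and g="\<lambda>w. w + 1" and x=z, OF _ e1] dF[OF z1] by simp
  qed
  have d2: "((\<lambda>w. F w + 1) has_field_derivative deriv F (z + 1)) (at z)"
    by (rule has_field_derivative_transform_within_open[OF d1 open_strip z]) (simp add: per)
  have d3: "((\<lambda>w. F w + 1) has_field_derivative deriv F z) (at z)"
    using dF[OF z] by (auto intro!: derivative_eq_intros)
  show ?thesis using DERIV_unique[OF d2 d3] .
qed

definition "g z = F z - z"
definition "gp z = deriv F z - 1"

lemma g_per: "z \<in> strip b \<Longrightarrow> g (z + 1) = g z"
  by (simp add: g_def per)

lemma gp_per: "z \<in> strip b \<Longrightarrow> gp (z + 1) = gp z"
  by (simp add: gp_def deriv_per)

lemma dg: "z \<in> strip b \<Longrightarrow> (g has_field_derivative gp z) (at z)"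
  unfolding g_def gp_def using dF by (auto intro!: derivative_eq_intros)

lemma hol_g: "g holomorphic_on strip b"
  unfolding g_def by (intro holomorphic_intros hol)

lemma hol_gp: "gp holomorphic_on strip b"
  unfolding gp_def by (intro holomorphic_intros holomorphic_deriv hol open_strip)

lemma cont_gp: "continuous_on (strip b) gp"
  using hol_gp holomorphic_on_imp_continuous_on by blast

lemma Complex_strip: "Complex x y \<in> strip b \<longleftrightarrow> \<bar>y\<bar> < b"
  by (simp add: strip_def)

lemma int_gp_zero: assumes y: "\<bar>y\<bar> < b"
  shows "((\<lambda>x. gp (Complex x y)) has_integral 0) {0..1}"
proof -
  have "((\<lambda>x. gp (Complex x y)) has_integral g (Complex 1 y) - g (Complex 0 y)) {0..1}"
  proof (rule fundamental_theorem_of_calculus)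
    fix x :: real assume "x \<in> {0..1}"
    show "((\<lambda>t. g (Complex t y)) has_vector_derivative gp (Complex x y)) (at x within {0..1})"
      by (rule line_vderiv[OF dg]) (simp add: Complex_strip y)
  qed simp
  moreover have "g (Complex 0 y + 1) = g (Complex 0 y)" by (rule g_per) (simp add: Complex_strip y)
  moreover have "Complex 0 y + 1 = Complex 1 y" by (simp add: complex_eq_iff)
  ultimately show ?thesis by simp
qed

lemma mean_exists: "\<exists>\<mu>. \<forall>y. \<bar>y\<bar> < b \<longrightarrow> ((\<lambda>x. g (Complex x y)) has_integral \<mu>) {0..1}"
proof -
  obtain P where P0: "\<And>x. x \<in> strip b \<Longrightarrow> (P has_field_derivative g x) (at x within strip b)"
    by (rule holomorphic_convex_primitive'[OF convex_strip open_strip hol_g], blast)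
  have P: "(P has_field_derivative g x) (at x)" if "x \<in> strip b" for x
    using P0[OF that] at_within_open[OF that open_strip] by metis
  have "\<exists>c. \<forall>z\<in>strip b. P (z + 1) - P z = c"
  proof (rule has_field_derivative_zero_constant[OF convex_strip])
    fix z assume z: "z \<in> strip b"
    have z1: "z + 1 \<in> strip b" using z strip_shift[of z 1] by simp
    have "((\<lambda>w. P (w + 1) - P w) has_field_derivative g (z + 1) - g z) (at z)"
    proof -
      have e1: "((\<lambda>w. w + 1) has_field_derivative 1) (at z)" by (auto intro!: derivative_eq_intros)
      have "((\<lambda>w. P (w + 1)) has_field_derivative g (z + 1)) (at z)"
        using DERIV_chain2[where f=P and g="\<lambda>w. w + 1" and x=z, OF _ e1] P[OF z1] by simp
      from DERIV_diff[OF this P[OF z]] show ?thesis .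
    qed
    then show "((\<lambda>w. P (w + 1) - P w) has_field_derivative 0) (at z within strip b)"
      using g_per[OF z] by (simp add: has_field_derivative_at_within)
  qed
  then obtain c where c: "\<And>z. z \<in> strip b \<Longrightarrow> P (z + 1) - P z = c" by blast
  have "((\<lambda>x. g (Complex x y)) has_integral c) {0..1}" if y: "\<bar>y\<bar> < b" for y
  proof -
    have "((\<lambda>x. g (Complex x y)) has_integral P (Complex 1 y) - P (Complex 0 y)) {0..1}"
    proof (rule fundamental_theorem_of_calculus)
      fix x :: real assume "x \<in> {0..1}"
      show "((\<lambda>t. P (Complex t y)) has_vector_derivative g (Complex x y)) (at x within {0..1})"
        by (rule line_vderiv[OF P]) (simp add: Complex_strip y)
    qed simp
    moreover have "P (Complex 0 y + 1) - P (Complex 0 y) = c" by (rule c) (simp add: Complex_strip y)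
    moreover have "Complex 0 y + 1 = Complex 1 y" by (simp add: complex_eq_iff)
    ultimately show ?thesis by simp
  qed
  then show ?thesis by blast
qed

end


context cyl begin

definition "ell y = integral {0..1} (\<lambda>x. cmod (gp (Complex x y)))"
definition "dd y = integral {0..1} (\<lambda>x. (cmod (gp (Complex x y)))^2)"
definition "mu = (SOME \<mu>. \<forall>y. \<bar>y\<bar> < b \<longrightarrow> ((\<lambda>x. g (Complex x y)) has_integral \<mu>) {0..1})"

lemma mu: "\<bar>y\<bar> < b \<Longrightarrow> ((\<lambda>x. g (Complex x y)) has_integral mu) {0..1::real}"
  using someI_ex[OF mean_exists] unfolding mu_def by blast

lemma cont_Complex_line: "continuous_on S (\<lambda>x. Complex x y)"
proof -
  have "(\<lambda>x. Complex x y) = (\<lambda>x. of_real x + Complex 0 y)"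
  proof
    fix x show "Complex x y = of_real x + Complex 0 y" by (simp add: complex_eq_iff)
  qed
  moreover have "continuous_on S (\<lambda>x. of_real x + Complex 0 y)"
    by (intro continuous_on_add continuous_on_of_real continuous_on_id continuous_on_const)
  ultimately show ?thesis by metis
qed

lemma cont_line: assumes "continuous_on (strip b) h" "\<bar>y\<bar> < b"
  shows "continuous_on S (\<lambda>x. h (Complex x y))"
  by (rule continuous_on_compose2[OF assms(1) cont_Complex_line]) (use assms(2) in \<open>auto simp: Complex_strip\<close>)

lemma cont_gp_line: "\<bar>y\<bar> < b \<Longrightarrow> continuous_on S (\<lambda>x. gp (Complex x y))"
  by (rule cont_line[OF cont_gp])

lemma cont_ngp_line: "\<bar>y\<bar> < b \<Longrightarrow> continuous_on S (\<lambda>x. cmod (gp (Complex x y)))"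
  by (rule continuous_on_norm[OF cont_gp_line])

lemma cont_ngp2_line: "\<bar>y\<bar> < b \<Longrightarrow> continuous_on S (\<lambda>x. (cmod (gp (Complex x y)))^2)"
  by (rule continuous_on_power[OF cont_ngp_line])

lemma int_ngp: "\<bar>y\<bar> < b \<Longrightarrow> (\<lambda>x. cmod (gp (Complex x y))) integrable_on {u..v}"
  by (rule integrable_continuous_interval[OF cont_ngp_line])

lemma int_ngp2: "\<bar>y\<bar> < b \<Longrightarrow> (\<lambda>x. (cmod (gp (Complex x y)))^2) integrable_on {u..v}"
  by (rule integrable_continuous_interval[OF cont_ngp2_line])

lemma ell_nonneg: "\<bar>y\<bar> < b \<Longrightarrow> 0 \<le> ell y"
  unfolding ell_def by (rule integral_nonneg[OF int_ngp]) auto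

lemma dd_nonneg: "\<bar>y\<bar> < b \<Longrightarrow> 0 \<le> dd y"
  unfolding dd_def by (rule integral_nonneg[OF int_ngp2]) auto

lemma ell_sq: assumes y: "\<bar>y\<bar> < b" shows "(ell y)^2 \<le> dd y"
proof -
  define w where "w = (\<lambda>x. cmod (gp (Complex x y)))"
  define l where "l = ell y"
  have i1: "(w has_integral l) {0..1::real}"
    using int_ngp[OF y] by (simp add: w_def l_def ell_def has_integral_integral)
  have i2: "((\<lambda>x. (w x)^2) has_integral dd y) {0..1::real}"
    using int_ngp2[OF y] by (simp add: w_def dd_def has_integral_integral)
  have i3: "((\<lambda>x. (w x)^2 - 2 * l * w x + l^2) has_integral dd y - 2 * l * l + l^2) {0..1::real}"
  proof -
    have a: "((\<lambda>x. 2 * l * w x) has_integral 2 * l * l) {0..1::real}"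
      using has_integral_mult_right[OF i1, of "2 * l"] by simp
    have c: "((\<lambda>x. l^2) has_integral l^2) {0..1::real}"
      using has_integral_const_real[of "l^2" 0 1] by simp
    show ?thesis by (rule has_integral_add[OF has_integral_diff[OF i2 a] c])
  qed
  have "0 \<le> dd y - 2 * l * l + l^2"
  proof (rule has_integral_nonneg[OF i3])
    fix x show "0 \<le> (w x)^2 - 2 * l * w x + l^2"
      using zero_le_power2[of "w x - l"] by (simp add: power2_eq_square algebra_simps)
  qed
  then show ?thesis by (simp add: l_def power2_eq_square)
qed

lemma ell_le_sqrt: "\<bar>y\<bar> < b \<Longrightarrow> ell y \<le> sqrt (dd y)"
  using ell_sq ell_nonneg real_le_rsqrt by blast

lemma diff_bound0:
  assumes y: "\<bar>y\<bar> < b" and s: "0 \<le> s" "s \<le> x" "x \<le> 1"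
  shows "cmod (g (Complex x y) - g (Complex s y)) \<le> ell y"
proof -
  have I: "((\<lambda>t. gp (Complex t y)) has_integral g (Complex x y) - g (Complex s y)) {s..x}"
  proof (rule fundamental_theorem_of_calculus)
    fix t :: real assume "t \<in> {s..x}"
    show "((\<lambda>t. g (Complex t y)) has_vector_derivative gp (Complex t y)) (at t within {s..x})"
      by (rule line_vderiv[OF dg]) (simp add: Complex_strip y)
  qed (use s in simp)
  have "norm (integral {s..x} (\<lambda>t. gp (Complex t y))) \<le> integral {s..x} (\<lambda>t. cmod (gp (Complex t y)))"
    by (rule integral_norm_bound_integral[OF has_integral_integrable[OF I] int_ngp[OF y]]) simp
  then have "cmod (g (Complex x y) - g (Complex s y)) \<le> integral {s..x} (\<lambda>t. cmod (gp (Complex t y)))"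
    using integral_unique[OF I] by simp
  also have "\<dots> \<le> ell y"
    unfolding ell_def by (rule integral_subset_le) (use s in \<open>auto intro: int_ngp[OF y]\<close>)
  finally show ?thesis .
qed

lemma diff_bound:
  assumes y: "\<bar>y\<bar> < b" and s: "0 \<le> s" "s \<le> 1" and x: "0 \<le> x" "x \<le> 1"
  shows "cmod (g (Complex x y) - g (Complex s y)) \<le> ell y"
proof (cases "s \<le> x")
  case True then show ?thesis using diff_bound0[OF y] s x by simp
next
  case False
  then have "cmod (g (Complex s y) - g (Complex x y)) \<le> ell y" using diff_bound0[OF y] s x by simp
  then show ?thesis by (simp add: norm_minus_commute)
qed

lemma line_bound: assumes z: "z \<in> strip b" shows "cmod (g z - mu) \<le> ell (Im z)"
proof -
  define y where "y = Im z"
  define x0 where "x0 = Re z - of_int \<lfloor>Re z\<rfloor>"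
  have y: "\<bar>y\<bar> < b" using z by (simp add: y_def strip_def)
  have x0: "0 \<le> x0" "x0 \<le> 1" unfolding x0_def by linarith+
  have zz: "z = Complex x0 y + of_int \<lfloor>Re z\<rfloor>" by (simp add: complex_eq_iff x0_def y_def)
  have "g (Complex x0 y + of_int \<lfloor>Re z\<rfloor>) = g (Complex x0 y) + of_int \<lfloor>Re z\<rfloor> * 0"
    by (rule per_int[of b g 0]) (auto simp: g_per Complex_strip y)
  then have "g z = g (Complex x0 y)" using arg_cong[OF zz, of g] by simp
  moreover have "cmod (g (Complex x0 y) - mu) \<le> ell y"
  proof -
    have "((\<lambda>s. g (Complex x0 y) - g (Complex s y)) has_integral g (Complex x0 y) - mu) {0..1::real}"
      using has_integral_diff[OF has_integral_const_real[of "g (Complex x0 y)" 0 1] mu[OF y]] by simp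
    then have "norm (g (Complex x0 y) - mu) \<le> ell y * Henstock_Kurzweil_Integration.content {0..1::real}"
      by (rule has_integral_bound_real[where S="{}", OF ell_nonneg[OF y] finite.emptyI])
         (use diff_bound[OF y _ _ x0] in auto)
    then show ?thesis by simp
  qed
  ultimately show ?thesis by (simp add: y_def)
qed

lemma sq_int: assumes y: "\<bar>y\<bar> < b"
  shows "((\<lambda>x. (cmod (deriv F (Complex x y)))^2) has_integral 1 + dd y) {0..1::real}"
proof -
  have pt: "(cmod (deriv F (Complex x y)))^2 = 1 + 2 * Re (gp (Complex x y)) + (cmod (gp (Complex x y)))^2" for x
  proof -
    have "deriv F (Complex x y) = 1 + gp (Complex x y)" by (simp add: gp_def)
    then show ?thesis unfolding cmod_power2 by (simp add: power2_eq_square algebra_simps)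
  qed
  have iRe: "((\<lambda>x. Re (gp (Complex x y))) has_integral 0) {0..1::real}"
    using has_integral_linear[OF int_gp_zero[OF y] bounded_linear_Re] by (simp add: o_def)
  have i2: "((\<lambda>x. (cmod (gp (Complex x y)))^2) has_integral dd y) {0..1::real}"
    using int_ngp2[OF y] by (simp add: dd_def has_integral_integral)
  have "((\<lambda>x. 1 + 2 * Re (gp (Complex x y)) + (cmod (gp (Complex x y)))^2) has_integral 1 + 2 * 0 + dd y) {0..1::real}"
  proof -
    have c1: "((\<lambda>x. 1::real) has_integral 1) {0..1::real}"
      using has_integral_const_real[of "1::real" 0 1] by simp
    have c2: "((\<lambda>x. 2 * Re (gp (Complex x y))) has_integral 2 * 0) {0..1::real}"
      using has_integral_mult_right[OF iRe, of 2] by simp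
    show ?thesis by (rule has_integral_add[OF has_integral_add[OF c1 c2] i2])
  qed
  then show ?thesis by (simp add: pt)
qed

end


lemma periodic_integral:
  fixes p :: "real \<Rightarrow> real"
  assumes cont: "continuous_on UNIV p" and per: "\<And>x. p (x + 1) = p x"
  shows "integral {0..real N} p = real N * integral {0..1} p"
proof (induction N)
  case 0 then show ?case by simp
next
  case (Suc N)
  have pn: "p (x + real n) = p x" for x n
  proof (induction n)
    case 0 then show ?case by simp
  next
    case (Suc n)
    have "p (x + real (Suc n)) = p (x + real n + 1)" by (simp add: algebra_simps)
    also have "\<dots> = p (x + real n)" by (rule per)
    finally show ?case using Suc by simp
  qed
  have int: "p integrable_on {0..real (Suc N)}"
    using cont by (intro integrable_continuous_interval) (auto intro: continuous_on_subset)
  have "integral {0..real (Suc N)} p = integral {0..real N} p + integral {real N..real (Suc N)} p"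
    using Henstock_Kurzweil_Integration.integral_combine[where a=0 and c="real N" and b="real (Suc N)" and f=p] int by simp
  moreover have "integral {real N..real (Suc N)} p = integral {0..1} p"
  proof -
    have "integral {0..1} (p \<circ> (+) (real N)) = integral {0 + real N..1 + real N} p"
      by (rule integral_shift_Icc_real)
    moreover have "p \<circ> (+) (real N) = p" by (auto simp: o_def pn add.commute)
    ultimately show ?thesis by (simp add: add.commute)
  qed
  ultimately show ?case using Suc.IH by (simp add: algebra_simps)
qed

context cyl begin

lemma cont_swap_Complex: "continuous_on T (\<lambda>p::real\<times>real. Complex (snd p) (fst p))"
proof -
  have "(\<lambda>p::real\<times>real. Complex (snd p) (fst p)) = (\<lambda>p. of_real (snd p) + \<i> * of_real (fst p))"
  proof
    fix p :: "real \<times> real" show "Complex (snd p) (fst p) = of_real (snd p) + \<i> * of_real (fst p)"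
      by (simp add: complex_eq_iff)
  qed
  moreover have "continuous_on T (\<lambda>p::real\<times>real. of_real (snd p) + \<i> * of_real (fst p))"
    by (intro continuous_on_add continuous_on_mult continuous_on_const continuous_on_of_real
        continuous_on_fst continuous_on_snd continuous_on_id)
  ultimately show ?thesis by metis
qed

lemma cont_pair: assumes "continuous_on (strip b) h" "\<And>p. p \<in> T \<Longrightarrow> \<bar>fst p\<bar> < b"
  shows "continuous_on T (\<lambda>p. h (Complex (snd p) (fst p)))"
  by (rule continuous_on_compose2[OF assms(1) cont_swap_Complex]) (use assms(2) in \<open>auto simp: Complex_strip\<close>)

lemma cont_dd: "continuous_on {-b<..<b} dd"
proof -
  have "continuous_on ({-b<..<b} \<times> cbox 0 1) (\<lambda>p. (cmod (gp (Complex (snd p) (fst p))))^2)"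
    by (intro continuous_on_power continuous_on_norm cont_pair[OF cont_gp]) auto
  then have "continuous_on {-b<..<b} (\<lambda>y. integral (cbox 0 1) (\<lambda>x. (cmod (gp (Complex x y)))^2))"
    by (intro integral_continuous_on_param) (simp add: case_prod_unfold)
  then show ?thesis by (simp add: dd_def[abs_def])
qed

lemma cont_derivF: "continuous_on (strip b) (deriv F)"
  using holomorphic_deriv[OF hol open_strip] holomorphic_on_imp_continuous_on by blast

lemma g_mu_bound: assumes h: "0 \<le> h" "h < b" and z: "\<bar>Im z\<bar> \<le> h"
  shows "cmod (g z - mu) \<le> ell h + ell (-h)"
proof -
  have hb: "\<bar>h\<bar> < b" "\<bar>-h\<bar> < b" using h by auto
  have hol': "(\<lambda>z. g z - mu) holomorphic_on strip b" by (intro holomorphic_intros hol_g)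
  have per': "(\<lambda>z. g z - mu) (z + 1) = (\<lambda>z. g z - mu) z" if "z \<in> strip b" for z
    using g_per[OF that] by simp
  have l1: "cmod ((\<lambda>z. g z - mu) (Complex x (-h))) \<le> ell h + ell (-h)" for x
    using line_bound[of "Complex x (-h)"] hb ell_nonneg[OF hb(1)] by (simp add: Complex_strip)
  have l2: "cmod ((\<lambda>z. g z - mu) (Complex x h)) \<le> ell h + ell (-h)" for x
    using line_bound[of "Complex x h"] hb ell_nonneg[OF hb(2)] by (simp add: Complex_strip)
  have t: "-b < -h" "-h \<le> h" "h < b" using h by auto
  have "cmod ((\<lambda>z. g z - mu) z) \<le> ell h + ell (-h)"
    by (rule periodic_max[OF hol' per' t l1 l2]) (use z in auto)
  then show ?thesis by simp
qed

lemma inner_int: assumes y: "\<bar>y\<bar> < b"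
  shows "integral {0..real N} (\<lambda>x. (cmod (deriv F (Complex x y)))^2) = real N * (1 + dd y)"
proof -
  have "integral {0..real N} (\<lambda>x. (cmod (deriv F (Complex x y)))^2) =
        real N * integral {0..1} (\<lambda>x. (cmod (deriv F (Complex x y)))^2)"
  proof (rule periodic_integral)
    show "continuous_on UNIV (\<lambda>x. (cmod (deriv F (Complex x y)))^2)"
      by (intro continuous_on_power continuous_on_norm cont_line[OF cont_derivF y])
    fix x
    have "deriv F (Complex x y + 1) = deriv F (Complex x y)" by (rule deriv_per) (simp add: Complex_strip y)
    moreover have "Complex x y + 1 = Complex (x + 1) y" by (simp add: complex_eq_iff)
    ultimately show "(cmod (deriv F (Complex (x + 1) y)))^2 = (cmod (deriv F (Complex x y)))^2" by simp
  qed
  then show ?thesis using integral_unique[OF sq_int[OF y]] by simp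
qed

end


context cyl begin

lemma area_ineq: assumes h: "0 < h" "h < b"
  shows "integral {-h..h} dd \<le> 2 * (ell h + ell (-h))"
proof -
  define L where "L = ell h + ell (-h)"
  have hb: "\<bar>h\<bar> < b" "\<bar>-h\<bar> < b" using h by auto
  have L0: "0 \<le> L" using ell_nonneg[OF hb(1)] ell_nonneg[OF hb(2)] by (simp add: L_def)
  define I where "I = integral {-h..h} dd"
  have ddint: "dd integrable_on {-h..h}"
    by (rule integrable_continuous_interval) (rule continuous_on_subset[OF cont_dd], use h in auto)
  have key: "real N * (2 * h + I) \<le> (real N + 2 * L) * (2 * h + 2 * L)" for N :: nat
  proof -
    have img: "Re mu - L \<le> Re (F (Complex x y)) \<and> Re (F (Complex x y)) \<le> real N + Re mu + L \<and>
          Im mu - h - L \<le> Im (F (Complex x y)) \<and> Im (F (Complex x y)) \<le> Im mu + h + L"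
      if "0 \<le> x" "x \<le> real N" "-h \<le> y" "y \<le> h" for x y
    proof -
      have "cmod (g (Complex x y) - mu) \<le> L"
        unfolding L_def by (rule g_mu_bound) (use h that in auto)
      then have r: "\<bar>Re (g (Complex x y) - mu)\<bar> \<le> L" and i: "\<bar>Im (g (Complex x y) - mu)\<bar> \<le> L"
        using abs_Re_le_cmod abs_Im_le_cmod order_trans by blast+
      have "F (Complex x y) = Complex x y + g (Complex x y)" by (simp add: g_def)
      then show ?thesis using r i that by (auto simp: abs_le_iff)
    qed
    have A: "integral (cbox (-h,0) (h,real N)) (\<lambda>(y,x). (cmod (deriv F (Complex x y)))^2)
            \<le> ((real N + Re mu + L) - (Re mu - L)) * ((Im mu + h + L) - (Im mu - h - L))"
      by (rule area_bound[OF hol open_strip injF _ img]) (use h in \<open>auto simp: Complex_strip\<close>)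
    have cont2: "continuous_on (cbox (-h,0) (h,real N)) (\<lambda>(y,x). (cmod (deriv F (Complex x y)))^2)"
      unfolding case_prod_unfold
      by (intro continuous_on_power continuous_on_norm cont_pair[OF cont_derivF])
         (use h in \<open>auto simp: cbox_Pair_iff\<close>)
    have "integral (cbox (-h,0) (h,real N)) (\<lambda>(y,x). (cmod (deriv F (Complex x y)))^2)
          = integral {-h..h} (\<lambda>y. integral {0..real N} (\<lambda>x. (cmod (deriv F (Complex x y)))^2))"
      using integral_prod_continuous[OF cont2] by (simp add: box_real)
    also have "\<dots> = integral {-h..h} (\<lambda>y. real N * (1 + dd y))"
    proof (rule integral_cong)
      fix y assume "y \<in> {-h..h}"
      then have "\<bar>y\<bar> < b" using h by auto
      then show "integral {0..real N} (\<lambda>x. (cmod (deriv F (Complex x y)))^2) = real N * (1 + dd y)"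
        using inner_int by simp
    qed
    also have "\<dots> = real N * (2 * h + I)"
    proof -
      have "((\<lambda>y. 1 + dd y) has_integral (h - (-h)) * 1 + I) {-h..h}"
        using has_integral_add[OF has_integral_const_real[of "1::real" "-h" h] integrable_integral[OF ddint]]
        using h by (simp add: I_def)
      from has_integral_mult_right[OF this, of "real N"]
      have "((\<lambda>y. real N * (1 + dd y)) has_integral real N * ((h - (-h)) * 1 + I)) {-h..h}" .
      then show ?thesis by (simp add: integral_unique algebra_simps)
    qed
    finally show ?thesis using A by (simp add: algebra_simps)
  qed
  show ?thesis
  proof (rule ccontr)
    assume "\<not> ?thesis"
    then have d: "0 < I - 2 * L" by (simp add: I_def L_def)
    obtain N :: nat where N: "2 * L * (2 * h + 2 * L) / (I - 2 * L) < real N"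
      using reals_Archimedean2 by blast
    have "real N * (I - 2 * L) \<le> 2 * L * (2 * h + 2 * L)"
      using key[of N] by (simp add: algebra_simps)
    moreover have "2 * L * (2 * h + 2 * L) < real N * (I - 2 * L)"
      using N d by (simp add: field_simps)
    ultimately show False by simp
  qed
qed

end


lemma ode_bound:
  fixes D e :: "real \<Rightarrow> real"
  assumes ac: "a < c" and der: "\<And>t. t \<in> {a..c} \<Longrightarrow> (D has_real_derivative e t) (at t)"
    and sq: "\<And>t. t \<in> {a..c} \<Longrightarrow> (D t)^2 \<le> K * e t" and K: "0 < K" and Da: "0 \<le> D a"
  shows "D a \<le> K / (c - a)"
proof (cases "D a = 0")
  case True then show ?thesis using K ac by simp
next
  case False
  then have Dpos: "0 < D a" using Da by simp
  have e0: "0 \<le> e t" if "t \<in> {a..c}" for t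
  proof -
    have "0 \<le> (D t)^2" by simp
    also have "\<dots> \<le> K * e t" using sq[OF that] .
    finally show ?thesis using K by (simp add: zero_le_mult_iff)
  qed
  have cont: "continuous_on {a..c} D"
    using has_real_derivative_imp_continuous_on[of "{a..c}" D e] der by blast
  have mono: "D a \<le> D t" if t: "t \<in> {a..c}" for t
  proof (rule DERIV_nonneg_imp_increasing_open[where a=a and b=t and f=D])
    show "a \<le> t" using t by simp
    show "continuous_on {a..t} D" by (rule continuous_on_subset[OF cont]) (use t in auto)
    fix x assume "a < x" "x < t"
    then have "x \<in> {a..c}" using t by auto
    then show "\<exists>y. (D has_real_derivative y) (at x) \<and> 0 \<le> y" using der e0 by blast
  qed
  have Dt: "0 < D t" if "t \<in> {a..c}" for t using mono[OF that] Dpos by simp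
  define \<phi> where "\<phi> = (\<lambda>t. - inverse (D t) - t / K)"
  have dphi: "(\<phi> has_real_derivative (e t * inverse ((D t)^2) - 1 / K)) (at t)" if t: "t \<in> {a..c}" for t
  proof -
    have d1: "((\<lambda>t. inverse (D t)) has_real_derivative - (e t * inverse ((D t)^2))) (at t)"
      using DERIV_inverse_fun[OF der[OF t]] Dt[OF t] by (simp add: power2_eq_square)
    have d2: "((\<lambda>t. t / K) has_real_derivative 1 / K) (at t)"
      using DERIV_cdivide[OF DERIV_ident, of K] by simp
    show ?thesis using DERIV_diff[OF DERIV_minus[OF d1] d2] by (simp add: \<phi>_def)
  qed
  have dphi0: "0 \<le> e t * inverse ((D t)^2) - 1 / K" if t: "t \<in> {a..c}" for t
  proof -
    have "(D t)^2 \<le> K * e t" by (rule sq[OF t])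
    moreover have "0 < (D t)^2" using Dt[OF t] by simp
    ultimately have "1 / K \<le> e t / (D t)^2" using K by (simp add: field_simps)
    then show ?thesis by (simp add: field_simps)
  qed
  have contphi: "continuous_on {a..c} \<phi>"
    using has_real_derivative_imp_continuous_on[of "{a..c}" \<phi> "\<lambda>t. e t * inverse ((D t)^2) - 1 / K"] dphi by blast
  have "\<phi> a \<le> \<phi> c"
  proof (rule DERIV_nonneg_imp_increasing_open[where a=a and b=c and f=\<phi>])
    show "a \<le> c" using ac by simp
    show "continuous_on {a..c} \<phi>" by (rule contphi)
    fix x assume "a < x" "x < c"
    then have "x \<in> {a..c}" by auto
    then show "\<exists>y. (\<phi> has_real_derivative y) (at x) \<and> 0 \<le> y" using dphi dphi0 by blast
  qed
  then have "(c - a) / K \<le> inverse (D a) - inverse (D c)"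
    unfolding \<phi>_def diff_divide_distrib by linarith
  also have "\<dots> \<le> inverse (D a)" using Dt[of c] ac by simp
  finally have "(c - a) / K \<le> 1 / D a" by (simp add: field_simps)
  then show ?thesis using Dpos K ac by (simp add: field_simps)
qed

context cyl begin

definition "ee s = dd s + dd (-s)"
definition "DD h = integral {0..h} ee"

lemma ee_cont: assumes "c0 < b" shows "continuous_on {0..c0} ee"
proof -
  have "continuous_on {0..c0} dd" by (rule continuous_on_subset[OF cont_dd]) (use assms in auto)
  moreover have "continuous_on {0..c0} (\<lambda>s. dd (-s))"
    by (rule continuous_on_compose2[OF cont_dd continuous_on_minus[OF continuous_on_id]]) (use assms in auto)
  ultimately show ?thesis unfolding ee_def[abs_def] by (rule continuous_on_add)
qed

lemma ee_nonneg: "\<bar>s\<bar> < b \<Longrightarrow> 0 \<le> ee s"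
  unfolding ee_def using dd_nonneg[of s] dd_nonneg[of "-s"] by simp

lemma DD_eq: assumes h: "0 \<le> h" "h < b" shows "integral {-h..h} dd = DD h"
proof -
  have cdd: "continuous_on {-h..h} dd" by (rule continuous_on_subset[OF cont_dd]) (use h in auto)
  have "integral {-h..h} dd = integral {-h..0} dd + integral {0..h} dd"
    using Henstock_Kurzweil_Integration.integral_combine[where a="-h" and c=0 and b=h and f=dd]
      integrable_continuous_interval[OF cdd] h by simp
  moreover have "integral {-h..0} dd = integral {0..h} (\<lambda>s. dd (-s))"
    using Henstock_Kurzweil_Integration.integral_reflect_real[of h 0 "\<lambda>s. dd (-s)"] by simp
  moreover have "integral {0..h} ee = integral {0..h} dd + integral {0..h} (\<lambda>s. dd (-s))"
  proof -
    have c1: "continuous_on {0..h} dd" by (rule continuous_on_subset[OF cont_dd]) (use h in auto)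
    have c2: "continuous_on {0..h} (\<lambda>s. dd (-s))"
      by (rule continuous_on_compose2[OF cont_dd continuous_on_minus[OF continuous_on_id]]) (use h in auto)
    show ?thesis unfolding ee_def[abs_def]
      by (rule integral_add[OF integrable_continuous_interval[OF c1] integrable_continuous_interval[OF c2]])
  qed
  ultimately show ?thesis by (simp add: DD_def)
qed

lemma DD_nonneg: assumes "0 \<le> h" "h < b" shows "0 \<le> DD h"
  unfolding DD_def by (rule integral_nonneg[OF integrable_continuous_interval[OF ee_cont[OF assms(2)]]])
    (use assms in \<open>auto intro: ee_nonneg\<close>)

lemma DD_deriv: assumes t: "0 < t" "t < c0" "c0 < b"
  shows "(DD has_real_derivative ee t) (at t)"
proof -
  have "(DD has_real_derivative ee t) (at t within {0..c0})"
    unfolding DD_def[abs_def] by (rule integral_has_real_derivative[OF ee_cont[OF t(3)]]) (use t in auto)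
  then show ?thesis using at_within_Icc_at[of 0 t c0] t by simp
qed

lemma DD_sq: assumes h: "0 < h" "h < b" shows "(DD h)^2 \<le> 8 * ee h"
proof -
  have hb: "\<bar>h\<bar> < b" "\<bar>-h\<bar> < b" using h by auto
  have "DD h \<le> 2 * (ell h + ell (-h))" using area_ineq[OF h] DD_eq[of h] h by simp
  also have "\<dots> \<le> 2 * (sqrt (dd h) + sqrt (dd (-h)))"
    using ell_le_sqrt[OF hb(1)] ell_le_sqrt[OF hb(2)] by simp
  finally have le: "DD h \<le> 2 * (sqrt (dd h) + sqrt (dd (-h)))" .
  have D0: "0 \<le> DD h" using DD_nonneg h by simp
  have "(DD h)^2 \<le> (2 * (sqrt (dd h) + sqrt (dd (-h))))^2"
    using power_mono[OF le D0] by simp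
  also have "\<dots> \<le> 8 * ((sqrt (dd h))^2 + (sqrt (dd (-h)))^2)"
    using zero_le_power2[of "sqrt (dd h) - sqrt (dd (-h))"] by (simp add: power2_eq_square algebra_simps)
  also have "\<dots> = 8 * ee h" using dd_nonneg[OF hb(1)] dd_nonneg[OF hb(2)] by (simp add: ee_def)
  finally show ?thesis .
qed

lemma DD_small: assumes a: "0 < a" "a < b" shows "DD a \<le> 16 / (b - a)"
proof -
  define c' where "c' = (a + b) / 2"
  define c0 where "c0 = (c' + b) / 2"
  have "DD a \<le> 8 / (c' - a)"
  proof (rule ode_bound[where e=ee])
    show "a < c'" using a by (simp add: c'_def)
    show "(DD has_real_derivative ee t) (at t)" if "t \<in> {a..c'}" for t
      by (rule DD_deriv[of _ c0]) (use that a in \<open>auto simp: c'_def c0_def field_simps\<close>)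
    show "(DD t)^2 \<le> 8 * ee t" if "t \<in> {a..c'}" for t
      by (rule DD_sq) (use that a in \<open>auto simp: c'_def\<close>)
    show "0 \<le> DD a" using DD_nonneg a by simp
  qed simp
  also have "8 / (c' - a) = 16 / (b - a)" by (simp add: c'_def field_simps)
  finally show ?thesis .
qed

lemma g_osc: assumes z: "\<bar>Im z\<bar> + 1 < b" shows "cmod (g z - g 0) \<le> 4 * sqrt (DD (\<bar>Im z\<bar> + 1))"
proof -
  define A where "A = \<bar>Im z\<bar> + 1"
  define y0 where "y0 = \<bar>Im z\<bar>"
  have Ab: "A < b" "0 < A" using z by (auto simp: A_def)
  have ce: "continuous_on {y0..A} ee"
    by (rule continuous_on_subset[OF ee_cont[OF Ab(1)]]) (auto simp: y0_def A_def)
  obtain s where s: "s \<in> {y0..A}" and smin: "\<forall>t\<in>{y0..A}. ee s \<le> ee t"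
    using continuous_attains_inf[OF compact_Icc _ ce] by (auto simp: y0_def A_def)
  have sb: "0 \<le> s" "s < b" "\<bar>s\<bar> < b" "\<bar>-s\<bar> < b" using s Ab by (auto simp: y0_def)
  have "ee s \<le> integral {y0..A} ee"
  proof -
    have "integral {y0..A} (\<lambda>t. ee s) \<le> integral {y0..A} ee"
      by (rule integral_le[OF integrable_const_ivl integrable_continuous_interval[OF ce]]) (use smin in auto)
    then show ?thesis by (simp add: y0_def A_def)
  qed
  also have "\<dots> \<le> DD A" unfolding DD_def
  proof (rule integral_subset_le)
    show "{y0..A} \<subseteq> {0..A}" by (auto simp: y0_def)
    show "ee integrable_on {y0..A}" by (rule integrable_continuous_interval[OF ce])
    show "ee integrable_on {0..A}" by (rule integrable_continuous_interval[OF ee_cont[OF Ab(1)]])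
    show "\<forall>x\<in>{0..A}. 0 \<le> ee x" using Ab by (auto intro!: ee_nonneg)
  qed
  finally have es: "ee s \<le> DD A" .
  have bnd: "cmod (g w - mu) \<le> 2 * sqrt (DD A)" if w: "\<bar>Im w\<bar> \<le> s" for w
  proof -
    have "cmod (g w - mu) \<le> ell s + ell (-s)" by (rule g_mu_bound) (use sb w in auto)
    also have "\<dots> \<le> sqrt (dd s) + sqrt (dd (-s))" using ell_le_sqrt sb by (simp add: add_mono)
    also have "\<dots> \<le> sqrt (ee s) + sqrt (ee s)"
      using dd_nonneg[OF sb(3)] dd_nonneg[OF sb(4)] by (intro add_mono real_sqrt_le_mono) (simp_all add: ee_def)
    also have "\<dots> \<le> 2 * sqrt (DD A)" using es by simp
    finally show ?thesis .
  qed
  have "cmod (g z - g 0) \<le> cmod (g z - mu) + cmod (g 0 - mu)"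
    using norm_triangle_ineq4[of "g z - mu" "g 0 - mu"] by simp
  also have "\<dots> \<le> 2 * sqrt (DD A) + 2 * sqrt (DD A)"
    by (intro add_mono bnd) (use s sb in \<open>auto simp: y0_def\<close>)
  finally show ?thesis by (simp add: A_def)
qed

end



theorem theorem6p1:
  fixes \<epsilon> :: real
  assumes "\<epsilon> > 0"
  shows "\<exists>c>0. \<forall>b>c. \<forall>F. cyl_embedding_lift b F \<and> F 0 \<in> \<int> \<longrightarrow>
           (\<forall>z\<in>strip (b - c). cyl_dist (F z) z \<le> \<epsilon>)"
proof -
  define c where "c = 2 + 256 / \<epsilon>^2"
  have e2: "0 < \<epsilon>^2" using assms by simp
  have c2: "2 \<le> c" using e2 by (simp add: c_def)
  show ?thesis
  proof (intro exI[of _ c] conjI allI impI ballI)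
    show "0 < c" using c2 by simp
    fix b F z assume b: "b > c" and HF: "cyl_embedding_lift b F \<and> F 0 \<in> \<int>" and z: "z \<in> strip (b - c)"
    interpret cyl F b using HF by unfold_locales (auto simp: cyl_embedding_lift_def)
    define A where "A = \<bar>Im z\<bar> + 1"
    have zb: "\<bar>Im z\<bar> + 1 < b" using z c2 by (simp add: strip_def)
    have osc: "cmod (g z - g 0) \<le> 4 * sqrt (DD A)" unfolding A_def by (rule g_osc[OF zb])
    have DA: "DD A \<le> 16 / (b - A)" by (rule DD_small) (use zb in \<open>auto simp: A_def\<close>)
    have bA: "256 / \<epsilon>^2 < b - A" using z b by (simp add: strip_def A_def c_def)
    have pos: "0 < 256 / \<epsilon>^2" using e2 by simp
    have "16 / (b - A) \<le> 16 / (256 / \<epsilon>^2)"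
    proof (rule divide_left_mono)
      show "256 / \<epsilon>^2 \<le> b - A" using bA by simp
      have "0 < b - A" using bA pos by linarith
      then show "0 < (b - A) * (256 / \<epsilon>^2)" using pos by (rule mult_pos_pos)
    qed simp
    also have "\<dots> = (\<epsilon> / 4)^2" using e2 by (simp add: field_simps power2_eq_square)
    finally have "DD A \<le> (\<epsilon> / 4)^2" using DA by simp
    then have "sqrt (DD A) \<le> \<epsilon> / 4"
      using real_sqrt_le_mono[of "DD A" "(\<epsilon>/4)^2"] assms by simp
    then have le: "cmod (g z - g 0) \<le> \<epsilon>" using osc by simp
    obtain k where k: "F 0 = of_int k" using HF by (auto elim: Ints_cases)
    have "g z - g 0 = F z - z - of_int k" by (simp add: g_def k)
    then have "cmod (F z - z - of_int k) \<le> \<epsilon>" using le by simp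
    moreover have "cyl_dist (F z) z \<le> cmod (F z - z - of_int k)"
      unfolding cyl_dist_def by (rule cINF_lower) (auto intro: bdd_belowI[of _ 0])
    ultimately show "cyl_dist (F z) z \<le> \<epsilon>" by simp
  qed
qed


end
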